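(* A continuous linear operator $L$ on $\mathcal{D}'(\mathbb{R}^d)$ satisfies $L\circ D_a=D_a\circ L$ for all $a\in\mathbb{R}_*^d$ if and only if there is $T\in\mathcal{D}_H'(\mathbb{R}^d)$ such that $L(S)=S\star T$ for all $S\in\mathcal{D}'(\mathbb{R}^d)$. In this case $T=L(\delta_{\mathbf 1})$.
   Context: $\mathbb{R}_*=\mathbb{R}\setminus\{0\}$; products and quotients of vectors are coordinatewise; $\mathbf 1=(1,\dots,1)$; $\sigma(a)=\prod_j a_j/|a_j|$. The dilation $D_a$ on $\mathcal{D}'(\mathbb{R}^d)$ is $(D_aT)\varphi=T_x\Big(\frac{\sigma(a)}{a_1\cdots a_d}\varphi\big(\tfrac{x}{a}\big)\Big)$. $\mathcal{D}_H'(\mathbb{R}^d)$ is the set of $T\in\mathcal{D}'(\mathbb{R}^d)$ such that for every $\varphi\in\mathcal{D}(\mathbb{R}^d)$ the function $y\mapsto T_\xi\varphi(\xi y)$, $y\in\mathbb{R}_*^d$, is the restriction of a function in $\mathcal{D}(\mathbb{R}^d)$, denoted $M_T\varphi$. For $T\in\mathcal{D}_H'(\mathbb{R}^d)$ and $S\in\mathcal{D}'(\mathbb{R}^d)$, $(S\star T)\varphi=S(M_T\varphi)$, written $S_y(T_x\varphi(xy))$. *)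

theory Defs
  imports "HOL-Analysis.Analysis"
begin

text \<open>Points of R^d are vectors of type real^'n ('n finite, d = CARD('n)).
Test functions and distributions are complex valued.\<close>

type_synonym 'n testfun = "real^'n \<Rightarrow> complex"
type_synonym 'n distr = "'n testfun \<Rightarrow> complex"

definition cmult :: "real^'n \<Rightarrow> real^'n \<Rightarrow> real^'n" where
  "cmult x y = (\<chi> i. x $ i * y $ i)"

definition cdiv :: "real^'n \<Rightarrow> real^'n \<Rightarrow> real^'n" where
  "cdiv x y = (\<chi> i. x $ i / y $ i)"

definition ones :: "real^'n" where
  "ones = (\<chi> i. 1)"

definition Rstar :: "(real^'n) set" where
  "Rstar = {a. \<forall>i. a $ i \<noteq> 0}"

definition sgnprod :: "real^'n \<Rightarrow> real" where
  "sgnprod a = (\<Prod>i\<in>UNIV. a $ i / \<bar>a $ i\<bar>)"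

definition pdiff :: "'n::finite \<Rightarrow> 'n testfun \<Rightarrow> 'n testfun" where
  "pdiff i f = (\<lambda>x. frechet_derivative f (at x) (axis i 1))"

fun pdiffs :: "'n::finite list \<Rightarrow> 'n testfun \<Rightarrow> 'n testfun" where
  "pdiffs [] f = f"
| "pdiffs (i # is) f = pdiff i (pdiffs is f)"

definition smooth :: "'n::finite testfun \<Rightarrow> bool" where
  "smooth f \<longleftrightarrow> (\<forall>is x. pdiffs is f differentiable (at x))"

definition testfuns :: "'n::finite testfun set" where
  "testfuns = {\<phi>. smooth \<phi> \<and> compact (closure {x. \<phi> x \<noteq> 0})}"

definition seminorm :: "nat \<Rightarrow> 'n::finite testfun \<Rightarrow> real" where
  "seminorm N \<phi> = Sup {norm (pdiffs is \<phi> x) | is x. length is \<le> N}"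

text \<open>Distributions: linear functionals on D(R^d) satisfying the usual
continuity estimate on each compact set; by convention they vanish outside
D(R^d), so that equality of distributions is equality of HOL functions.\<close>
definition distributions :: "'n::finite distr set" where
  "distributions = {T.
     (\<forall>\<phi>. \<phi> \<notin> testfuns \<longrightarrow> T \<phi> = 0) \<and>
     (\<forall>\<phi>\<in>testfuns. \<forall>\<psi>\<in>testfuns. T (\<lambda>x. \<phi> x + \<psi> x) = T \<phi> + T \<psi>) \<and>
     (\<forall>\<phi>\<in>testfuns. \<forall>c. T (\<lambda>x. c * \<phi> x) = c * T \<phi>) \<and>
     (\<forall>K. compact K \<longrightarrow> (\<exists>C N. \<forall>\<phi>\<in>testfuns. {x. \<phi> x \<noteq> 0} \<subseteq> K \<longrightarrow>
            norm (T \<phi>) \<le> C * seminorm N \<phi>))}"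

definition dilation :: "real^'n::finite \<Rightarrow> 'n distr \<Rightarrow> 'n distr" where
  "dilation a T = (\<lambda>\<phi>. if \<phi> \<in> testfuns then
       T (\<lambda>x. complex_of_real (sgnprod a / (\<Prod>i\<in>UNIV. a $ i)) * \<phi> (cdiv x a))
     else 0)"

definition dirac :: "real^'n::finite \<Rightarrow> 'n distr" where
  "dirac p = (\<lambda>\<phi>. if \<phi> \<in> testfuns then \<phi> p else 0)"

definition hadamard_distr :: "'n::finite distr set" where
  "hadamard_distr = {T. T \<in> distributions \<and>
     (\<forall>\<phi>\<in>testfuns. \<exists>\<psi>\<in>testfuns. \<forall>y\<in>Rstar. \<psi> y = T (\<lambda>\<xi>. \<phi> (cmult \<xi> y)))}"

definition MT :: "'n::finite distr \<Rightarrow> 'n testfun \<Rightarrow> 'n testfun" where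
  "MT T \<phi> = (SOME \<psi>. \<psi> \<in> testfuns \<and> (\<forall>y\<in>Rstar. \<psi> y = T (\<lambda>\<xi>. \<phi> (cmult \<xi> y))))"

definition mconv :: "'n::finite distr \<Rightarrow> 'n distr \<Rightarrow> 'n distr" where
  "mconv S T = (\<lambda>\<phi>. if \<phi> \<in> testfuns then S (MT T \<phi>) else 0)"

text \<open>Continuous linear operators on D'(R^d) (weak-* topology).\<close>
definition cont_lin_op :: "('n::finite distr \<Rightarrow> 'n distr) \<Rightarrow> bool" where
  "cont_lin_op L \<longleftrightarrow>
     (\<forall>S\<in>distributions. L S \<in> distributions) \<and>
     (\<forall>S\<in>distributions. \<forall>S'\<in>distributions. L (\<lambda>\<phi>. S \<phi> + S' \<phi>) = (\<lambda>\<phi>. L S \<phi> + L S' \<phi>)) \<and>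
     (\<forall>S\<in>distributions. \<forall>c. L (\<lambda>\<phi>. c * S \<phi>) = (\<lambda>\<phi>. c * L S \<phi>)) \<and>
     (\<forall>S\<in>distributions. \<forall>\<psi>\<in>testfuns. \<forall>\<epsilon>>0. \<exists>F \<delta>. finite F \<and> F \<subseteq> testfuns \<and> \<delta> > 0 \<and>
        (\<forall>S'\<in>distributions. (\<forall>\<phi>\<in>F. norm (S' \<phi> - S \<phi>) < \<delta>) \<longrightarrow>
            norm (L S' \<psi> - L S \<psi>) < \<epsilon>))"

end

theory Submission
  imports Defs
begin


lemma cmult_axis: "cmult (axis i 1) b = b $ i *\<^sub>R axis i 1"
  by (simp add: cmult_def vec_eq_iff axis_def)

lemma linear_cmult: "linear (\<lambda>x. cmult x b)"
  by (rule linearI) (simp_all add: cmult_def vec_eq_iff algebra_simps)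

lemma pdiff_add:
  fixes f :: "'n::finite testfun"
  assumes "f differentiable at x" "g differentiable at x"
  shows "pdiff i (\<lambda>x. f x + g x) x = pdiff i f x + pdiff i g x"
proof -
  have "((\<lambda>x. f x + g x) has_derivative (\<lambda>h. frechet_derivative f (at x) h + frechet_derivative g (at x) h)) (at x)"
    using assms by (intro has_derivative_add) (simp_all add: frechet_derivative_works)
  from frechet_derivative_at[OF this] show ?thesis unfolding pdiff_def by metis
qed

lemma dil_has_derivative:
  fixes f :: "'n::finite testfun"
  assumes "f differentiable at (cmult x b)"
  shows "((\<lambda>x. k * f (cmult x b)) has_derivative (\<lambda>h. k * frechet_derivative f (at (cmult x b)) (cmult h b))) (at x)"
proof -
  have 1: "((\<lambda>x. cmult x b) has_derivative (\<lambda>h. cmult h b)) (at x)"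
    by (rule linear_imp_has_derivative[OF linear_cmult])
  have "(f \<circ> (\<lambda>x. cmult x b) has_derivative (frechet_derivative f (at (cmult x b)) \<circ> (\<lambda>h. cmult h b))) (at x)"
    by (rule diff_chain_at[OF 1]) (use assms frechet_derivative_works in auto)
  then have "((\<lambda>x. f (cmult x b)) has_derivative (\<lambda>h. frechet_derivative f (at (cmult x b)) (cmult h b))) (at x)"
    by (simp add: o_def)
  from has_derivative_mult_right[OF this, of k] show ?thesis by simp
qed

lemma pdiff_dil:
  fixes f :: "'n::finite testfun"
  assumes "f differentiable at (cmult x b)"
  shows "pdiff i (\<lambda>x. k * f (cmult x b)) x = (k * of_real (b$i)) * pdiff i f (cmult x b)"
proof -
  have "linear (frechet_derivative f (at (cmult x b)))"
    using assms by (rule linear_frechet_derivative)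
  then have "frechet_derivative f (at (cmult x b)) (cmult (axis i 1) b) = b$i *\<^sub>R frechet_derivative f (at (cmult x b)) (axis i 1)"
    by (simp add: cmult_axis linear_scale)
  with frechet_derivative_at[OF dil_has_derivative[OF assms, of k]] show ?thesis
    unfolding pdiff_def by (metis mult.assoc scaleR_conv_of_real)
qed

lemma dil_differentiable:
  fixes f :: "'n::finite testfun"
  assumes "f differentiable at (cmult x b)"
  shows "(\<lambda>x. k * f (cmult x b)) differentiable at x"
  using dil_has_derivative[OF assms] differentiable_def by blast

lemma pdiffs_dil:
  fixes \<phi> :: "'n::finite testfun"
  assumes "smooth \<phi>"
  shows "\<exists>c. pdiffs is (\<lambda>x. k * \<phi> (cmult x b)) = (\<lambda>x. c * pdiffs is \<phi> (cmult x b))"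
proof (induction "is")
  case Nil
  then show ?case by auto
next
  case (Cons i "is")
  then obtain c where c: "pdiffs is (\<lambda>x. k * \<phi> (cmult x b)) = (\<lambda>x. c * pdiffs is \<phi> (cmult x b))" by blast
  have "pdiffs (i # is) (\<lambda>x. k * \<phi> (cmult x b)) = (\<lambda>x. (c * of_real (b$i)) * pdiffs (i#is) \<phi> (cmult x b))"
    using assms unfolding smooth_def by (auto simp: c pdiff_dil)
  then show ?case by blast
qed

lemma smooth_dil:
  fixes \<phi> :: "'n::finite testfun"
  assumes "smooth \<phi>"
  shows "smooth (\<lambda>x. k * \<phi> (cmult x b))"
  unfolding smooth_def
proof (intro allI)
  fix "is" x
  obtain c where c: "pdiffs is (\<lambda>x. k * \<phi> (cmult x b)) = (\<lambda>x. c * pdiffs is \<phi> (cmult x b))"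
    using pdiffs_dil[OF assms] by blast
  show "pdiffs is (\<lambda>x. k * \<phi> (cmult x b)) differentiable at x"
    unfolding c using assms unfolding smooth_def by (intro dil_differentiable) auto
qed

lemma pdiffs_add:
  fixes f g :: "'n::finite testfun"
  assumes "smooth f" "smooth g"
  shows "pdiffs is (\<lambda>x. f x + g x) = (\<lambda>x. pdiffs is f x + pdiffs is g x)"
proof (induction "is")
  case Nil
  then show ?case by simp
next
  case (Cons i "is")
  show ?case using assms unfolding smooth_def by (auto simp: Cons pdiff_add)
qed

lemma smooth_add:
  fixes f g :: "'n::finite testfun"
  assumes "smooth f" "smooth g"
  shows "smooth (\<lambda>x. f x + g x)"
  using assms unfolding smooth_def by (simp add: pdiffs_add[OF assms] differentiable_add)

lemma pdiffs_zero: "pdiffs is (\<lambda>x. 0 :: complex) = (\<lambda>x. 0)"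
  by (induction "is") (auto simp: pdiff_def)

lemma testfuns_iff: "\<phi> \<in> testfuns \<longleftrightarrow> smooth \<phi> \<and> bounded {x. \<phi> x \<noteq> 0}"
  unfolding testfuns_def by simp

lemma tf_zero: "(\<lambda>x. 0) \<in> testfuns"
  unfolding testfuns_iff smooth_def pdiffs_zero by simp

lemma tf_add: "\<phi> \<in> testfuns \<Longrightarrow> \<psi> \<in> testfuns \<Longrightarrow> (\<lambda>x. \<phi> x + \<psi> x) \<in> testfuns"
  unfolding testfuns_iff
  by (auto simp: smooth_add intro: bounded_subset[of "{x. \<phi> x \<noteq> 0} \<union> {x. \<psi> x \<noteq> 0}"])

lemma cmult_cdiv: "b \<in> Rstar \<Longrightarrow> cdiv (cmult x b) b = x"
  by (simp add: cmult_def cdiv_def Rstar_def vec_eq_iff)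

lemma linear_cdiv: "linear (\<lambda>x. cdiv x b)"
  by (rule linearI) (simp_all add: cdiv_def vec_eq_iff algebra_simps add_divide_distrib)

lemma tf_dil:
  assumes "\<phi> \<in> testfuns" "b \<in> Rstar"
  shows "(\<lambda>x. k * \<phi> (cmult x b)) \<in> testfuns"
proof -
  have "{x. k * \<phi> (cmult x b) \<noteq> 0} \<subseteq> (\<lambda>z. cdiv z b) ` {x. \<phi> x \<noteq> 0}"
    using cmult_cdiv[OF assms(2)] by (auto intro!: image_eqI)
  moreover have "bounded ((\<lambda>z. cdiv z b) ` {x. \<phi> x \<noteq> 0})"
    using assms(1) unfolding testfuns_iff
    by (intro bounded_linear_image) (auto simp: linear_conv_bounded_linear[symmetric] linear_cdiv)
  ultimately show ?thesis using assms(1) unfolding testfuns_iff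
    by (auto simp: smooth_dil intro: bounded_subset)
qed

lemma cmult_ones[simp]: "cmult x ones = x"
  by (simp add: cmult_def ones_def vec_eq_iff)

lemma ones_Rstar: "ones \<in> Rstar"
  by (simp add: ones_def Rstar_def)

lemma tf_scale: "\<phi> \<in> testfuns \<Longrightarrow> (\<lambda>x. k * \<phi> x) \<in> testfuns"
  using tf_dil[OF _ ones_Rstar, of \<phi> k] by simp

lemma tf_sum: "finite F \<Longrightarrow> F \<subseteq> testfuns \<Longrightarrow> (\<lambda>x. \<Sum>\<phi>\<in>F. c \<phi> * \<phi> x) \<in> testfuns"
proof (induction F rule: finite_induct)
  case empty
  then show ?case using tf_zero by simp
next
  case (insert a F)
  then show ?case by (simp add: tf_add tf_scale)
qed

lemma tf_continuous:
  assumes "\<phi> \<in> testfuns" shows "continuous_on UNIV \<phi>"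
proof -
  have "\<phi> differentiable at x" for x
    using assms unfolding testfuns_iff smooth_def by (metis pdiffs.simps(1))
  then show ?thesis
    by (meson continuous_at_imp_continuous_on differentiable_imp_continuous_within)
qed

lemma pdiffs_vanish:
  fixes \<phi> :: "'n::finite testfun"
  assumes "smooth \<phi>" "x \<notin> closure {x. \<phi> x \<noteq> 0}"
  shows "pdiffs is \<phi> x = 0"
  using assms(2)
proof (induction "is" arbitrary: x)
  case Nil
  have "x \<notin> {x. \<phi> x \<noteq> 0}" using Nil closure_subset[of "{x. \<phi> x \<noteq> 0}"] by blast
  then show ?case by simp
next
  case (Cons i "is")
  have d: "pdiffs is \<phi> differentiable at x" using assms(1) unfolding smooth_def by blast
  have "frechet_derivative (pdiffs is \<phi>) (at x) = frechet_derivative (\<lambda>_. 0) (at x)"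
  proof (rule frechet_derivative_transform_within_open[OF d, where X="- closure {x. \<phi> x \<noteq> 0}"])
    show "open (- closure {x. \<phi> x \<noteq> 0})" by blast
    show "x \<in> - closure {x. \<phi> x \<noteq> 0}" using Cons.prems by blast
    show "pdiffs is \<phi> y = 0" if "y \<in> - closure {x. \<phi> x \<noteq> 0}" for y
      using Cons.IH that by blast
  qed
  then show ?case by (simp add: pdiff_def)
qed

lemma pdiffs_bounded:
  fixes \<phi> :: "'n::finite testfun"
  assumes "\<phi> \<in> testfuns"
  shows "\<exists>B\<ge>0. \<forall>x. norm (pdiffs is \<phi> x) \<le> B"
proof -
  let ?K = "closure {x. \<phi> x \<noteq> 0}"
  have K: "compact ?K" using assms by (simp add: testfuns_def)
  have "continuous_on UNIV (pdiffs is \<phi>)"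
    using assms unfolding testfuns_iff smooth_def
    by (meson continuous_at_imp_continuous_on differentiable_imp_continuous_within)
  then have "compact (pdiffs is \<phi> ` ?K)"
    using K by (meson compact_continuous_image continuous_on_subset subset_UNIV)
  then obtain B where B: "\<forall>y\<in>pdiffs is \<phi> ` ?K. norm y \<le> B"
    using compact_imp_bounded bounded_iff by metis
  have "norm (pdiffs is \<phi> x) \<le> max B 0" for x
  proof (cases "x \<in> ?K")
    case True then show ?thesis using B by force
  next
    case False
    have "smooth \<phi>" using assms unfolding testfuns_iff by blast
    then have "pdiffs is \<phi> x = 0" using pdiffs_vanish False by blast
    then show ?thesis by simp
  qed
  then show ?thesis by (intro exI[of _ "max B 0"]) auto
qed

lemma seminorm_bdd:
  fixes \<phi> :: "'n::finite testfun"
  assumes "\<phi> \<in> testfuns"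
  shows "bdd_above {norm (pdiffs is \<phi> x) | is x. length is \<le> N}"
proof -
  obtain Bf where Bf: "\<And>is x. norm (pdiffs is \<phi> x) \<le> Bf is" "\<And>is. Bf is \<ge> 0"
    using pdiffs_bounded[OF assms] by metis
  let ?Ls = "{xs :: 'n list. set xs \<subseteq> UNIV \<and> length xs \<le> N}"
  have fin: "finite ?Ls" by (rule finite_lists_length_le) simp
  have "norm (pdiffs is \<phi> x) \<le> (\<Sum>j\<in>?Ls. Bf j)" if "length is \<le> N" for "is" x
  proof -
    have "Bf is \<le> (\<Sum>j\<in>?Ls. Bf j)"
      by (rule member_le_sum) (use that Bf(2) fin in auto)
    then show ?thesis using Bf(1)[of "is" x] by linarith
  qed
  then show ?thesis by (intro bdd_aboveI[where M="\<Sum>j\<in>?Ls. Bf j"]) auto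
qed

lemma seminorm_ge:
  assumes "\<phi> \<in> testfuns" "length is \<le> N"
  shows "norm (pdiffs is \<phi> x) \<le> seminorm N \<phi>"
  unfolding seminorm_def by (rule cSup_upper) (use assms seminorm_bdd[OF assms(1)] in auto)

lemma seminorm_nonneg:
  assumes "\<phi> \<in> testfuns" shows "0 \<le> seminorm N \<phi>"
proof -
  have "norm (\<phi> 0) \<le> seminorm N \<phi>" using seminorm_ge[OF assms, of "[]" N 0] by simp
  then show ?thesis by (meson norm_ge_zero order_trans)
qed

lemma seminorm_mono:
  assumes "\<phi> \<in> testfuns" "N \<le> M" shows "seminorm N \<phi> \<le> seminorm M \<phi>"
  unfolding seminorm_def
proof (rule cSup_subset_mono)
  show "{norm (pdiffs is \<phi> x) | is x. length is \<le> N} \<noteq> {}"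
  proof -
    have "norm (pdiffs [] \<phi> 0) \<in> {norm (pdiffs is \<phi> x) | is x. length is \<le> N}" by fastforce
    then show ?thesis by (metis empty_iff)
  qed
qed (use assms seminorm_bdd[OF assms(1)] in auto)

lemma seminorm_eval: "\<phi> \<in> testfuns \<Longrightarrow> norm (\<phi> p) \<le> seminorm 0 \<phi>"
  using seminorm_ge[of \<phi> "[]" 0 p] by simp

lemma distr_zero: "(\<lambda>\<phi>. 0) \<in> distributions"
  unfolding distributions_def mem_Collect_eq
  by (intro conjI allI impI ballI exI[of _ 0]) simp_all

lemma distrD:
  assumes "S \<in> distributions"
  shows distrD1: "\<forall>\<phi>. \<phi> \<notin> testfuns \<longrightarrow> S \<phi> = 0"
    and distrD2: "\<forall>\<phi>\<in>testfuns. \<forall>\<psi>\<in>testfuns. S (\<lambda>x. \<phi> x + \<psi> x) = S \<phi> + S \<psi>"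
    and distrD3: "\<forall>\<phi>\<in>testfuns. \<forall>c. S (\<lambda>x. c * \<phi> x) = c * S \<phi>"
    and distrD4: "\<forall>K. compact K \<longrightarrow> (\<exists>C N. \<forall>\<phi>\<in>testfuns. {x. \<phi> x \<noteq> 0} \<subseteq> K \<longrightarrow>
            norm (S \<phi>) \<le> C * seminorm N \<phi>)"
proof -
  note H = assms[unfolded distributions_def mem_Collect_eq]
  show "\<forall>\<phi>. \<phi> \<notin> testfuns \<longrightarrow> S \<phi> = 0" by (rule H[THEN conjunct1])
  show "\<forall>\<phi>\<in>testfuns. \<forall>\<psi>\<in>testfuns. S (\<lambda>x. \<phi> x + \<psi> x) = S \<phi> + S \<psi>" by (rule H[THEN conjunct2, THEN conjunct1])
  show "\<forall>\<phi>\<in>testfuns. \<forall>c. S (\<lambda>x. c * \<phi> x) = c * S \<phi>" by (rule H[THEN conjunct2, THEN conjunct2, THEN conjunct1])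
  show "\<forall>K. compact K \<longrightarrow> (\<exists>C N. \<forall>\<phi>\<in>testfuns. {x. \<phi> x \<noteq> 0} \<subseteq> K \<longrightarrow>
            norm (S \<phi>) \<le> C * seminorm N \<phi>)" by (rule H[THEN conjunct2, THEN conjunct2, THEN conjunct2])
qed

lemma distr_comb:
  assumes S: "S \<in> distributions" and S': "S' \<in> distributions"
  shows "(\<lambda>\<phi>. S \<phi> + c * S' \<phi>) \<in> distributions"
proof -
  have est: "\<exists>C N. \<forall>\<phi>\<in>testfuns. {x. \<phi> x \<noteq> 0} \<subseteq> K \<longrightarrow> norm (S \<phi> + c * S' \<phi>) \<le> C * seminorm N \<phi>"
    if K: "compact K" for K
  proof -
    obtain C1 N1 where 1: "\<forall>\<phi>\<in>testfuns. {x. \<phi> x \<noteq> 0} \<subseteq> K \<longrightarrow> norm (S \<phi>) \<le> C1 * seminorm N1 \<phi>"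
      using distrD4[OF S] K by meson
    obtain C2 N2 where 2: "\<forall>\<phi>\<in>testfuns. {x. \<phi> x \<noteq> 0} \<subseteq> K \<longrightarrow> norm (S' \<phi>) \<le> C2 * seminorm N2 \<phi>"
      using distrD4[OF S'] K by meson
    have "norm (S \<phi> + c * S' \<phi>) \<le> (\<bar>C1\<bar> + norm c * \<bar>C2\<bar>) * seminorm (max N1 N2) \<phi>"
      if "\<phi> \<in> testfuns" "{x. \<phi> x \<noteq> 0} \<subseteq> K" for \<phi>
    proof -
      have a: "norm (S \<phi>) \<le> \<bar>C1\<bar> * seminorm (max N1 N2) \<phi>"
      proof -
        have "norm (S \<phi>) \<le> C1 * seminorm N1 \<phi>" using 1 that by simp
        also have "\<dots> \<le> \<bar>C1\<bar> * seminorm N1 \<phi>" using seminorm_nonneg[OF that(1)]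
          by (simp add: mult_right_mono)
        also have "\<dots> \<le> \<bar>C1\<bar> * seminorm (max N1 N2) \<phi>"
          using seminorm_mono[OF that(1), of N1 "max N1 N2"] by (simp add: mult_left_mono)
        finally show ?thesis .
      qed
      have b: "norm (S' \<phi>) \<le> \<bar>C2\<bar> * seminorm (max N1 N2) \<phi>"
      proof -
        have "norm (S' \<phi>) \<le> C2 * seminorm N2 \<phi>" using 2 that by simp
        also have "\<dots> \<le> \<bar>C2\<bar> * seminorm N2 \<phi>" using seminorm_nonneg[OF that(1)]
          by (simp add: mult_right_mono)
        also have "\<dots> \<le> \<bar>C2\<bar> * seminorm (max N1 N2) \<phi>"
          using seminorm_mono[OF that(1), of N2 "max N1 N2"] by (simp add: mult_left_mono)
        finally show ?thesis .
      qed
      have "norm (S \<phi> + c * S' \<phi>) \<le> norm (S \<phi>) + norm c * norm (S' \<phi>)"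
        using norm_triangle_ineq[of "S \<phi>" "c * S' \<phi>"] by (simp add: norm_mult)
      also have "\<dots> \<le> \<bar>C1\<bar> * seminorm (max N1 N2) \<phi> + norm c * (\<bar>C2\<bar> * seminorm (max N1 N2) \<phi>)"
        using a b by (intro add_mono mult_left_mono) auto
      finally show ?thesis by (simp add: algebra_simps)
    qed
    then show ?thesis by blast
  qed
  show ?thesis unfolding distributions_def mem_Collect_eq
  proof (intro conjI)
    show "\<forall>\<phi>. \<phi> \<notin> testfuns \<longrightarrow> S \<phi> + c * S' \<phi> = 0" using distrD1[OF S] distrD1[OF S'] by simp
    show "\<forall>\<phi>\<in>testfuns. \<forall>\<psi>\<in>testfuns. S (\<lambda>x. \<phi> x + \<psi> x) + c * S' (\<lambda>x. \<phi> x + \<psi> x) = S \<phi> + c * S' \<phi> + (S \<psi> + c * S' \<psi>)"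
      using distrD2[OF S] distrD2[OF S'] by (simp add: algebra_simps)
    show "\<forall>\<phi>\<in>testfuns. \<forall>d. S (\<lambda>x. d * \<phi> x) + c * S' (\<lambda>x. d * \<phi> x) = d * (S \<phi> + c * S' \<phi>)"
      using distrD3[OF S] distrD3[OF S'] by (simp add: algebra_simps)
    show "\<forall>K. compact K \<longrightarrow> (\<exists>C N. \<forall>\<phi>\<in>testfuns. {x. \<phi> x \<noteq> 0} \<subseteq> K \<longrightarrow> norm (S \<phi> + c * S' \<phi>) \<le> C * seminorm N \<phi>)"
      using est by blast
  qed
qed

lemma distr_scale: "S \<in> distributions \<Longrightarrow> (\<lambda>\<phi>. c * S \<phi>) \<in> distributions"
  using distr_comb[OF distr_zero, of S c] by simp

lemma Rstar_dense: "x \<in> closure (Rstar :: (real^'n::finite) set)"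
  unfolding closure_approachable
proof (intro allI impI)
  fix e :: real assume e: "e > 0"
  define t where "t = e / (2 * (real CARD('n) + 1))"
  have t: "t > 0" using e by (simp add: t_def)
  define z :: "real^'n" where "z = (\<chi> i. if x$i = 0 then t else x$i)"
  have zR: "z \<in> Rstar" using t by (simp add: z_def Rstar_def)
  have "dist z x = norm (z - x)" by (simp add: dist_norm)
  also have "\<dots> \<le> (\<Sum>i\<in>UNIV. \<bar>(z - x)$i\<bar>)" by (rule norm_le_l1_cart)
  also have "\<dots> \<le> (\<Sum>i\<in>(UNIV::'n set). t)"
    by (rule sum_mono) (use t in \<open>simp add: z_def\<close>)
  also have "\<dots> = real CARD('n) * t" by simp
  also have "\<dots> < e"
  proof -
    have "real CARD('n) * t < (2 * (real CARD('n) + 1)) * t" using t by (intro mult_strict_right_mono) auto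
    also have "\<dots> = e" using e by (simp add: t_def)
    finally show ?thesis .
  qed
  finally show "\<exists>y\<in>Rstar. dist y x < e" using zR by blast
qed

lemma tf_eq_Rstar:
  fixes \<phi> \<psi> :: "'n::finite testfun"
  assumes "\<phi> \<in> testfuns" "\<psi> \<in> testfuns" "\<forall>y\<in>Rstar. \<phi> y = \<psi> y"
  shows "\<phi> = \<psi>"
proof -
  have c: "closed {x. \<phi> x = \<psi> x}"
    by (rule closed_Collect_eq) (use assms tf_continuous in auto)
  have "Rstar \<subseteq> {x. \<phi> x = \<psi> x}" using assms(3) by auto
  then have "closure Rstar \<subseteq> {x. \<phi> x = \<psi> x}" using c by (rule closure_minimal)
  then show ?thesis using Rstar_dense by blast
qed

lemma dirac_distr: "dirac (p :: real^'n::finite) \<in> distributions"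
  unfolding distributions_def mem_Collect_eq
proof (intro conjI)
  show "\<forall>\<phi>. \<phi> \<notin> testfuns \<longrightarrow> dirac p \<phi> = 0" by (simp add: dirac_def)
  show "\<forall>\<phi>\<in>testfuns. \<forall>\<psi>\<in>testfuns. dirac p (\<lambda>x. \<phi> x + \<psi> x) = dirac p \<phi> + dirac p \<psi>"
    by (simp add: dirac_def tf_add)
  show "\<forall>\<phi>\<in>testfuns. \<forall>c. dirac p (\<lambda>x. c * \<phi> x) = c * dirac p \<phi>"
    by (simp add: dirac_def tf_scale)
  show "\<forall>K. compact K \<longrightarrow> (\<exists>C N. \<forall>\<phi>\<in>testfuns. {x. \<phi> x \<noteq> 0} \<subseteq> K \<longrightarrow> norm (dirac p \<phi>) \<le> C * seminorm N \<phi>)"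
  proof (intro allI impI)
    fix K :: "(real^'n) set"
    have "norm (dirac p \<phi>) \<le> 1 * seminorm 0 \<phi>" if "\<phi> \<in> testfuns" for \<phi>
      using that by (simp add: dirac_def seminorm_eval)
    then show "\<exists>C N. \<forall>\<phi>\<in>testfuns. {x. \<phi> x \<noteq> 0} \<subseteq> K \<longrightarrow> norm (dirac p \<phi>) \<le> C * seminorm N \<phi>"
      by blast
  qed
qed

lemma Rstar_inv: "a \<in> Rstar \<Longrightarrow> cdiv ones a \<in> Rstar"
  unfolding Rstar_def cdiv_def ones_def by simp

lemma cdiv_as_cmult: "cdiv x a = cmult x (cdiv ones a)"
  unfolding cdiv_def cmult_def ones_def by (simp add: vec_eq_iff)

lemma tf_dil2:
  assumes "\<phi> \<in> testfuns" "a \<in> Rstar"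
  shows "(\<lambda>x. k * \<phi> (cdiv x a)) \<in> testfuns"
  using tf_dil[OF assms(1) Rstar_inv[OF assms(2)], of k] by (simp only: cdiv_as_cmult[symmetric])

lemma dil_const_nz:
  assumes "a \<in> Rstar"
  shows "sgnprod a / (\<Prod>i\<in>UNIV. a $ i) \<noteq> 0"
proof -
  have a: "a $ i \<noteq> 0" for i using assms by (simp add: Rstar_def)
  have "(\<Prod>i\<in>UNIV. a $ i) \<noteq> 0" using a by (simp add: prod_zero_iff)
  moreover have "sgnprod a \<noteq> 0" unfolding sgnprod_def using a by (simp add: prod_zero_iff)
  ultimately show ?thesis by simp
qed



lemma lin_comb:
  fixes V :: "('b \<Rightarrow> complex) set" and g :: "('b \<Rightarrow> complex) \<Rightarrow> complex" and F :: "'b set"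
  assumes "finite F"
    and "\<forall>S\<in>V. \<forall>S'\<in>V. \<forall>c. (\<lambda>\<phi>. S \<phi> + c * S' \<phi>) \<in> V"
    and "\<forall>S\<in>V. \<forall>S'\<in>V. \<forall>c. g (\<lambda>\<phi>. S \<phi> + c * S' \<phi>) = g S + c * g S'"
    and "\<forall>S\<in>V. (\<forall>\<phi>\<in>F. S \<phi> = 0) \<longrightarrow> g S = 0"
  shows "\<exists>c. \<forall>S\<in>V. g S = (\<Sum>\<phi>\<in>F. c \<phi> * S \<phi>)"
  using assms
proof (induction F arbitrary: V rule: finite_induct)
  case empty
  then show ?case by simp
next
  case (insert a F V)
  let ?V' = "{S\<in>V. S a = 0}"
  have cl: "\<forall>S\<in>?V'. \<forall>S'\<in>?V'. \<forall>c. (\<lambda>\<phi>. S \<phi> + c * S' \<phi>) \<in> ?V'"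
    using insert.prems(1) by auto
  have li: "\<forall>S\<in>?V'. \<forall>S'\<in>?V'. \<forall>c. g (\<lambda>\<phi>. S \<phi> + c * S' \<phi>) = g S + c * g S'"
    using insert.prems(2) by auto
  have va: "\<forall>S\<in>?V'. (\<forall>\<phi>\<in>F. S \<phi> = 0) \<longrightarrow> g S = 0"
    using insert.prems(3) by auto
  obtain c where c: "\<forall>S\<in>?V'. g S = (\<Sum>\<phi>\<in>F. c \<phi> * S \<phi>)"
    using insert.IH[OF cl li va] by blast
  have sumF: "(\<Sum>\<phi>\<in>F. d \<phi> * S \<phi>) = (\<Sum>\<phi>\<in>F. c \<phi> * S \<phi>)" if "\<forall>\<phi>\<in>F. d \<phi> = c \<phi>" for d S
    using that by (intro sum.cong) auto
  show ?case
  proof (cases "\<forall>S\<in>V. S a = 0")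
    case True
    let ?c' = "c(a := 0)"
    have "g S = (\<Sum>\<phi>\<in>insert a F. ?c' \<phi> * S \<phi>)" if "S \<in> V" for S
    proof -
      have "(\<Sum>\<phi>\<in>insert a F. ?c' \<phi> * S \<phi>) = (\<Sum>\<phi>\<in>F. ?c' \<phi> * S \<phi>)"
        using insert.hyps by simp
      also have "\<dots> = (\<Sum>\<phi>\<in>F. c \<phi> * S \<phi>)" using insert.hyps by (intro sumF) auto
      also have "\<dots> = g S" using c that True by auto
      finally show ?thesis by simp
    qed
    then show ?thesis by blast
  next
    case False
    then obtain S0 where S0: "S0 \<in> V" "S0 a \<noteq> 0" by blast
    define h where "h S = g S - (\<Sum>\<phi>\<in>F. c \<phi> * S \<phi>)" for S
    let ?c' = "c(a := h S0 / S0 a)"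
    have "g S = (\<Sum>\<phi>\<in>insert a F. ?c' \<phi> * S \<phi>)" if S: "S \<in> V" for S
    proof -
      define t where "t = S a / S0 a"
      let ?R = "\<lambda>\<phi>. S \<phi> + (- t) * S0 \<phi>"
      have "?R \<in> V" using insert.prems(1) S S0 by blast
      moreover have "?R a = 0" using S0 by (simp add: t_def)
      ultimately have R: "?R \<in> ?V'" by blast
      have e1: "g ?R = g S + (- t) * g S0" using insert.prems(2) S S0 by blast
      have e2: "g ?R = (\<Sum>\<phi>\<in>F. c \<phi> * ?R \<phi>)" using c R by blast
      have e3: "(\<Sum>\<phi>\<in>F. c \<phi> * ?R \<phi>) = (\<Sum>\<phi>\<in>F. c \<phi> * S \<phi>) - t * (\<Sum>\<phi>\<in>F. c \<phi> * S0 \<phi>)"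
        by (simp add: sum.distrib sum_distrib_left sum_subtractf algebra_simps)
      have e: "g S - t * g S0 = (\<Sum>\<phi>\<in>F. c \<phi> * S \<phi>) - t * (\<Sum>\<phi>\<in>F. c \<phi> * S0 \<phi>)"
        using e1 e2 e3 by simp
      have "g S = (g S - t * g S0) + t * g S0" by simp
      also have "\<dots> = (\<Sum>\<phi>\<in>F. c \<phi> * S \<phi>) - t * (\<Sum>\<phi>\<in>F. c \<phi> * S0 \<phi>) + t * g S0"
        by (simp only: e)
      also have "\<dots> = (\<Sum>\<phi>\<in>F. c \<phi> * S \<phi>) + t * h S0"
        by (simp only: h_def right_diff_distrib) simp
      also have "\<dots> = (\<Sum>\<phi>\<in>F. c \<phi> * S \<phi>) + ?c' a * S a"
        using S0 by (simp add: t_def)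
      also have "\<dots> = (\<Sum>\<phi>\<in>insert a F. ?c' \<phi> * S \<phi>)"
      proof -
        have "(\<Sum>\<phi>\<in>F. ?c' \<phi> * S \<phi>) = (\<Sum>\<phi>\<in>F. c \<phi> * S \<phi>)"
          using insert.hyps by (intro sumF) auto
        then show ?thesis using insert.hyps by simp
      qed
      finally show ?thesis .
    qed
    then show ?thesis by blast
  qed
qed



lemma pdiffs_dil_exact:
  fixes \<phi> :: "'n::finite testfun"
  assumes "smooth \<phi>"
  shows "pdiffs is (\<lambda>x. k * \<phi> (cmult x b)) = (\<lambda>x. (k * prod_list (map (\<lambda>i. complex_of_real (b$i)) is)) * pdiffs is \<phi> (cmult x b))"
proof (induction "is")
  case Nil
  then show ?case by simp
next
  case (Cons i "is")
  have "pdiffs (i # is) (\<lambda>x. k * \<phi> (cmult x b)) = pdiff i (\<lambda>x. (k * prod_list (map (\<lambda>i. complex_of_real (b$i)) is)) * pdiffs is \<phi> (cmult x b))"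
    by (simp add: Cons)
  also have "\<dots> = (\<lambda>x. ((k * prod_list (map (\<lambda>i. complex_of_real (b$i)) is)) * of_real (b$i)) * pdiffs (i#is) \<phi> (cmult x b))"
    using assms unfolding smooth_def by (auto simp: pdiff_dil)
  finally show ?case by (simp add: algebra_simps)
qed

lemma norm_prod_list_le:
  assumes "\<And>i. norm (f i :: complex) \<le> M" "0 \<le> M"
  shows "norm (prod_list (map f xs)) \<le> M ^ length xs"
proof (induction xs)
  case Nil then show ?case by simp
next
  case (Cons a xs)
  have "norm (prod_list (map f (a # xs))) = norm (f a) * norm (prod_list (map f xs))"
    by (simp add: norm_mult)
  also have "\<dots> \<le> M * M ^ length xs"
    using assms Cons by (intro mult_mono) auto
  finally show ?case by simp
qed

lemma seminorm_dil:
  assumes "\<phi> \<in> testfuns" "b \<in> Rstar"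
  shows "\<exists>C. \<forall>\<phi>\<in>testfuns. seminorm N (\<lambda>x. k * \<phi> (cmult x b)) \<le> C * seminorm N \<phi>"
proof -
  define M where "M = max 1 (\<Sum>i\<in>UNIV. \<bar>b$i\<bar>)"
  have M1: "M \<ge> 1" by (simp add: M_def)
  have Mb: "norm (complex_of_real (b$i)) \<le> M" for i
  proof -
    have "\<bar>b$i\<bar> \<le> (\<Sum>i\<in>UNIV. \<bar>b$i\<bar>)" by (rule member_le_sum) auto
    then show ?thesis by (simp add: M_def)
  qed
  have "seminorm N (\<lambda>x. k * \<phi> (cmult x b)) \<le> (norm k * M ^ N) * seminorm N \<phi>" if \<phi>: "\<phi> \<in> testfuns" for \<phi>
    unfolding seminorm_def[of N "\<lambda>x. k * \<phi> (cmult x b)"]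
  proof (rule cSup_least)
    have "norm (pdiffs [] (\<lambda>x. k * \<phi> (cmult x b)) 0) \<in> {norm (pdiffs is (\<lambda>x. k * \<phi> (cmult x b)) x) | is x. length is \<le> N}"
      by fastforce
    then show "{norm (pdiffs is (\<lambda>x. k * \<phi> (cmult x b)) x) | is x. length is \<le> N} \<noteq> {}" by (metis empty_iff)
    fix z assume "z \<in> {norm (pdiffs is (\<lambda>x. k * \<phi> (cmult x b)) x) | is x. length is \<le> N}"
    then obtain "is" x where z: "z = norm (pdiffs is (\<lambda>x. k * \<phi> (cmult x b)) x)" and l: "length is \<le> N"
      by auto
    have sm: "smooth \<phi>" using \<phi> by (simp add: testfuns_iff)
    have "z = norm k * norm (prod_list (map (\<lambda>i. complex_of_real (b$i)) is)) * norm (pdiffs is \<phi> (cmult x b))"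
      unfolding z pdiffs_dil_exact[OF sm] by (simp add: norm_mult)
    also have "\<dots> \<le> norm k * M ^ N * seminorm N \<phi>"
    proof (intro mult_mono)
      have "norm (prod_list (map (\<lambda>i. complex_of_real (b$i)) is)) \<le> M ^ length is"
        by (rule norm_prod_list_le[OF Mb]) (use M1 in simp)
      also have "\<dots> \<le> M ^ N" using M1 l by (simp add: power_increasing)
      finally show "norm (prod_list (map (\<lambda>i. complex_of_real (b$i)) is)) \<le> M ^ N" .
      show "norm (pdiffs is \<phi> (cmult x b)) \<le> seminorm N \<phi>" by (rule seminorm_ge[OF \<phi> l])
    qed (use M1 seminorm_nonneg[OF \<phi>] in auto)
    finally show "z \<le> norm k * M ^ N * seminorm N \<phi>" .
  qed
  then show ?thesis by blast
qed

lemma dilation_distr: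
  assumes S: "S \<in> distributions" and a: "a \<in> Rstar"
  shows "dilation a S \<in> distributions"
proof -
  define k where "k = complex_of_real (sgnprod a / (\<Prod>i\<in>UNIV. a $ i))"
  define b where "b = cdiv ones a"
  have b: "b \<in> Rstar" using a by (simp add: b_def Rstar_inv)
  have dil: "dilation a S = (\<lambda>\<phi>. if \<phi> \<in> testfuns then S (\<lambda>x. k * \<phi> (cmult x b)) else 0)"
    unfolding dilation_def k_def b_def by (simp only: cdiv_as_cmult[symmetric])
  have tfd: "\<phi> \<in> testfuns \<Longrightarrow> (\<lambda>x. c * \<phi> (cmult x b)) \<in> testfuns" for \<phi> c
    using tf_dil[OF _ b] by blast
  show ?thesis unfolding distributions_def mem_Collect_eq
  proof (intro conjI)
    show "\<forall>\<phi>. \<phi> \<notin> testfuns \<longrightarrow> dilation a S \<phi> = 0" by (simp add: dil)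
    show "\<forall>\<phi>\<in>testfuns. \<forall>\<psi>\<in>testfuns. dilation a S (\<lambda>x. \<phi> x + \<psi> x) = dilation a S \<phi> + dilation a S \<psi>"
    proof (intro ballI)
      fix \<phi> \<psi> :: "'a testfun" assume \<phi>: "\<phi> \<in> testfuns" and \<psi>: "\<psi> \<in> testfuns"
      have "(\<lambda>x. k * (\<phi> (cmult x b) + \<psi> (cmult x b))) = (\<lambda>x. k * \<phi> (cmult x b) + k * \<psi> (cmult x b))"
        by (simp add: algebra_simps)
      moreover have "(\<lambda>x. \<phi> x + \<psi> x) \<in> testfuns" using \<phi> \<psi> by (rule tf_add)
      moreover have "S (\<lambda>x. k * \<phi> (cmult x b) + k * \<psi> (cmult x b)) = S (\<lambda>x. k * \<phi> (cmult x b)) + S (\<lambda>x. k * \<psi> (cmult x b))"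
        using distrD2[OF S, rule_format, OF tfd[OF \<phi>, of k] tfd[OF \<psi>, of k]] by simp
      ultimately show "dilation a S (\<lambda>x. \<phi> x + \<psi> x) = dilation a S \<phi> + dilation a S \<psi>"
        using \<phi> \<psi> by (simp add: dil)
    qed
    show "\<forall>\<phi>\<in>testfuns. \<forall>c. dilation a S (\<lambda>x. c * \<phi> x) = c * dilation a S \<phi>"
    proof (intro ballI allI)
      fix \<phi> :: "'a testfun" and c assume \<phi>: "\<phi> \<in> testfuns"
      have "(\<lambda>x. k * (c * \<phi> (cmult x b))) = (\<lambda>x. c * (k * \<phi> (cmult x b)))"
        by (simp add: algebra_simps)
      moreover have "(\<lambda>x. c * \<phi> x) \<in> testfuns" using \<phi> by (rule tf_scale)
      moreover have "S (\<lambda>x. c * (k * \<phi> (cmult x b))) = c * S (\<lambda>x. k * \<phi> (cmult x b))"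
        using distrD3[OF S, rule_format, OF tfd[OF \<phi>, of k], of c] by simp
      ultimately show "dilation a S (\<lambda>x. c * \<phi> x) = c * dilation a S \<phi>"
        using \<phi> by (simp add: dil)
    qed
    show "\<forall>K. compact K \<longrightarrow> (\<exists>C N. \<forall>\<phi>\<in>testfuns. {x. \<phi> x \<noteq> 0} \<subseteq> K \<longrightarrow> norm (dilation a S \<phi>) \<le> C * seminorm N \<phi>)"
    proof (intro allI impI)
      fix K :: "(real^'a) set" assume K: "compact K"
      let ?K' = "(\<lambda>z. cdiv z b) ` K"
      have K': "compact ?K'"
        by (rule compact_continuous_image[OF _ K])
           (simp add: linear_continuous_on linear_conv_bounded_linear[symmetric] linear_cdiv)
      obtain C N where CN: "\<forall>\<phi>\<in>testfuns. {x. \<phi> x \<noteq> 0} \<subseteq> ?K' \<longrightarrow> norm (S \<phi>) \<le> C * seminorm N \<phi>"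
        using distrD4[OF S, rule_format, OF K'] by blast
      obtain C' where C': "\<forall>\<phi>\<in>testfuns. seminorm N (\<lambda>x. k * \<phi> (cmult x b)) \<le> C' * seminorm N \<phi>"
        using seminorm_dil[OF tf_zero b] by blast
      have "norm (dilation a S \<phi>) \<le> (\<bar>C\<bar> * C') * seminorm N \<phi>"
        if \<phi>: "\<phi> \<in> testfuns" and sp: "{x. \<phi> x \<noteq> 0} \<subseteq> K" for \<phi>
      proof -
        have sp': "{x. k * \<phi> (cmult x b) \<noteq> 0} \<subseteq> ?K'"
        proof
          fix x assume "x \<in> {x. k * \<phi> (cmult x b) \<noteq> 0}"
          then have "cmult x b \<in> K" using sp by auto
          moreover have "x = cdiv (cmult x b) b" using cmult_cdiv[OF b] by simp
          ultimately show "x \<in> ?K'" by blast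
        qed
        have "norm (dilation a S \<phi>) = norm (S (\<lambda>x. k * \<phi> (cmult x b)))" using \<phi> by (simp add: dil)
        also have "\<dots> \<le> C * seminorm N (\<lambda>x. k * \<phi> (cmult x b))" by (rule CN[rule_format, OF tfd[OF \<phi>] sp'])
        also have "\<dots> \<le> \<bar>C\<bar> * seminorm N (\<lambda>x. k * \<phi> (cmult x b))"
          using seminorm_nonneg[OF tfd[OF \<phi>]] by (simp add: mult_right_mono)
        also have "\<dots> \<le> \<bar>C\<bar> * (C' * seminorm N \<phi>)" by (rule mult_left_mono[OF C'[rule_format, OF \<phi>]]) simp
        finally show ?thesis by (simp add: mult.assoc)
      qed
      then show "\<exists>C N. \<forall>\<phi>\<in>testfuns. {x. \<phi> x \<noteq> 0} \<subseteq> K \<longrightarrow> norm (dilation a S \<phi>) \<le> C * seminorm N \<phi>"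
        by blast
    qed
  qed
qed



lemma clD:
  assumes "cont_lin_op L"
  shows clD1: "\<forall>S\<in>distributions. L S \<in> distributions"
    and clD2: "\<forall>S\<in>distributions. \<forall>S'\<in>distributions. L (\<lambda>\<phi>. S \<phi> + S' \<phi>) = (\<lambda>\<phi>. L S \<phi> + L S' \<phi>)"
    and clD3: "\<forall>S\<in>distributions. \<forall>c. L (\<lambda>\<phi>. c * S \<phi>) = (\<lambda>\<phi>. c * L S \<phi>)"
    and clD4: "\<forall>S\<in>distributions. \<forall>\<psi>\<in>testfuns. \<forall>\<epsilon>>0. \<exists>F \<delta>. finite F \<and> F \<subseteq> testfuns \<and> \<delta> > 0 \<and>
        (\<forall>S'\<in>distributions. (\<forall>\<phi>\<in>F. norm (S' \<phi> - S \<phi>) < \<delta>) \<longrightarrow>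
            norm (L S' \<psi> - L S \<psi>) < \<epsilon>)"
proof -
  note H = assms[unfolded cont_lin_op_def]
  show "\<forall>S\<in>distributions. L S \<in> distributions" by (rule H[THEN conjunct1])
  show "\<forall>S\<in>distributions. \<forall>S'\<in>distributions. L (\<lambda>\<phi>. S \<phi> + S' \<phi>) = (\<lambda>\<phi>. L S \<phi> + L S' \<phi>)"
    by (rule H[THEN conjunct2, THEN conjunct1])
  show "\<forall>S\<in>distributions. \<forall>c. L (\<lambda>\<phi>. c * S \<phi>) = (\<lambda>\<phi>. c * L S \<phi>)"
    by (rule H[THEN conjunct2, THEN conjunct2, THEN conjunct1])
  show "\<forall>S\<in>distributions. \<forall>\<psi>\<in>testfuns. \<forall>\<epsilon>>0. \<exists>F \<delta>. finite F \<and> F \<subseteq> testfuns \<and> \<delta> > 0 \<and>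
        (\<forall>S'\<in>distributions. (\<forall>\<phi>\<in>F. norm (S' \<phi> - S \<phi>) < \<delta>) \<longrightarrow>
            norm (L S' \<psi> - L S \<psi>) < \<epsilon>)"
    by (rule H[THEN conjunct2, THEN conjunct2, THEN conjunct2])
qed

lemma distr_zero_fun:
  assumes "S \<in> distributions" shows "S (\<lambda>x. 0) = 0"
  using distrD3[OF assms, rule_format, OF tf_zero, of 0] by simp

lemma distr_sum:
  assumes S: "S \<in> distributions"
  shows "finite F \<Longrightarrow> F \<subseteq> testfuns \<Longrightarrow> S (\<lambda>x. \<Sum>\<phi>\<in>F. c \<phi> * \<phi> x) = (\<Sum>\<phi>\<in>F. c \<phi> * S \<phi>)"
proof (induction F rule: finite_induct)
  case empty
  then show ?case using distr_zero_fun[OF S] by simp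
next
  case (insert a F)
  have a: "a \<in> testfuns" and F: "F \<subseteq> testfuns" using insert.prems by auto
  have t1: "(\<lambda>x. c a * a x) \<in> testfuns" using a by (rule tf_scale)
  have t2: "(\<lambda>x. \<Sum>\<phi>\<in>F. c \<phi> * \<phi> x) \<in> testfuns" using insert.hyps(1) F by (rule tf_sum)
  have "S (\<lambda>x. \<Sum>\<phi>\<in>insert a F. c \<phi> * \<phi> x) = S (\<lambda>x. c a * a x + (\<Sum>\<phi>\<in>F. c \<phi> * \<phi> x))"
    using insert.hyps by simp
  also have "\<dots> = S (\<lambda>x. c a * a x) + S (\<lambda>x. \<Sum>\<phi>\<in>F. c \<phi> * \<phi> x)"
    using distrD2[OF S, rule_format, OF t1 t2] by simp
  also have "\<dots> = c a * S a + (\<Sum>\<phi>\<in>F. c \<phi> * S \<phi>)"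
    using distrD3[OF S, rule_format, OF a, of "c a"] insert.IH[OF F] by simp
  finally show ?case using insert.hyps by simp
qed

lemma L_zero:
  assumes "cont_lin_op L" shows "L (\<lambda>\<phi>. 0) = (\<lambda>\<phi>. 0)"
  using clD3[OF assms, rule_format, OF distr_zero, of 0] by simp

lemma transpose:
  fixes L :: "'n::finite distr \<Rightarrow> 'n distr"
  assumes L: "cont_lin_op L" and \<psi>: "\<psi> \<in> testfuns"
  shows "\<exists>\<psi>'\<in>testfuns. \<forall>S\<in>distributions. L S \<psi> = S \<psi>'"
proof -
  obtain F \<delta> where F: "finite F" "F \<subseteq> testfuns" "\<delta> > 0"
    and cont: "\<forall>S'\<in>distributions. (\<forall>\<phi>\<in>F. norm (S' \<phi> - 0) < \<delta>) \<longrightarrow> norm (L S' \<psi> - L (\<lambda>\<phi>. 0) \<psi>) < 1"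
    using clD4[OF L, rule_format, OF distr_zero \<psi>, of 1] by auto
  have van: "\<forall>S\<in>distributions. (\<forall>\<phi>\<in>F. S \<phi> = 0) \<longrightarrow> L S \<psi> = 0"
  proof (intro ballI impI)
    fix S assume S: "S \<in> distributions" and z: "\<forall>\<phi>\<in>F. S \<phi> = 0"
    show "L S \<psi> = 0"
    proof (rule ccontr)
      assume nz: "L S \<psi> \<noteq> 0"
      define t where "t = complex_of_real (2 / norm (L S \<psi>))"
      have tS: "(\<lambda>\<phi>. t * S \<phi>) \<in> distributions" using S by (rule distr_scale)
      have "\<forall>\<phi>\<in>F. norm ((\<lambda>\<phi>. t * S \<phi>) \<phi> - 0) < \<delta>" using z F(3) by simp
      then have "norm (L (\<lambda>\<phi>. t * S \<phi>) \<psi> - L (\<lambda>\<phi>. 0) \<psi>) < 1" using cont[rule_format, OF tS] by simp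
      moreover have "L (\<lambda>\<phi>. t * S \<phi>) \<psi> = t * L S \<psi>" using clD3[OF L, rule_format, OF S, of t] by simp
      moreover have "norm (t * L S \<psi>) = 2"
      proof -
        have "norm (t * L S \<psi>) = (2 / norm (L S \<psi>)) * norm (L S \<psi>)"
          unfolding norm_mult t_def norm_of_real by simp
        then show ?thesis using nz by simp
      qed
      ultimately show False using L_zero[OF L] by simp
    qed
  qed
  have cl: "\<forall>S\<in>(distributions :: 'n distr set). \<forall>S'\<in>distributions. \<forall>c. (\<lambda>\<phi>. S \<phi> + c * S' \<phi>) \<in> distributions"
  proof (intro ballI allI)
    fix S S' :: "'n distr" and c assume "S \<in> distributions" "S' \<in> distributions"
    then show "(\<lambda>\<phi>. S \<phi> + c * S' \<phi>) \<in> distributions" by (rule distr_comb)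
  qed
  have li: "\<forall>S\<in>distributions. \<forall>S'\<in>distributions. \<forall>c. L (\<lambda>\<phi>. S \<phi> + c * S' \<phi>) \<psi> = L S \<psi> + c * L S' \<psi>"
  proof (intro ballI allI)
    fix S S' :: "'n distr" and c assume S: "S \<in> distributions" and S': "S' \<in> distributions"
    have cS': "(\<lambda>\<phi>. c * S' \<phi>) \<in> distributions" using S' by (rule distr_scale)
    have "L (\<lambda>\<phi>. S \<phi> + (\<lambda>\<phi>. c * S' \<phi>) \<phi>) = (\<lambda>\<phi>. L S \<phi> + L (\<lambda>\<phi>. c * S' \<phi>) \<phi>)"
      using clD2[OF L, rule_format, OF S cS'] .
    then show "L (\<lambda>\<phi>. S \<phi> + c * S' \<phi>) \<psi> = L S \<psi> + c * L S' \<psi>"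
      using clD3[OF L, rule_format, OF S', of c] by simp
  qed
  obtain c where c: "\<forall>S\<in>distributions. L S \<psi> = (\<Sum>\<phi>\<in>F. c \<phi> * S \<phi>)"
    using lin_comb[OF F(1) cl li van] by blast
  define \<psi>' where "\<psi>' = (\<lambda>x. \<Sum>\<phi>\<in>F. c \<phi> * \<phi> x)"
  have "\<psi>' \<in> testfuns" unfolding \<psi>'_def using F(1,2) by (rule tf_sum)
  moreover have "\<forall>S\<in>distributions. L S \<psi> = S \<psi>'"
  proof
    fix S :: "'n distr" assume S: "S \<in> distributions"
    show "L S \<psi> = S \<psi>'" unfolding \<psi>'_def
      using c[rule_format, OF S] distr_sum[OF S F(1,2), of c] by simp
  qed
  ultimately show ?thesis by blast
qed

lemma MT_prop:
  assumes "T \<in> hadamard_distr" "\<phi> \<in> testfuns"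
  shows "MT T \<phi> \<in> testfuns \<and> (\<forall>y\<in>Rstar. MT T \<phi> y = T (\<lambda>\<xi>. \<phi> (cmult \<xi> y)))"
proof -
  have "\<exists>\<psi>. \<psi> \<in> testfuns \<and> (\<forall>y\<in>Rstar. \<psi> y = T (\<lambda>\<xi>. \<phi> (cmult \<xi> y)))"
    using assms unfolding hadamard_distr_def by blast
  then show ?thesis unfolding MT_def by (rule someI_ex)
qed

lemma MT_eq:
  assumes "T \<in> hadamard_distr" "\<phi> \<in> testfuns" "\<psi> \<in> testfuns"
    "\<forall>y\<in>Rstar. \<psi> y = T (\<lambda>\<xi>. \<phi> (cmult \<xi> y))"
  shows "MT T \<phi> = \<psi>"
proof (rule tf_eq_Rstar)
  show "MT T \<phi> \<in> testfuns" using MT_prop[OF assms(1,2)] by blast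
  show "\<psi> \<in> testfuns" by (rule assms(3))
  show "\<forall>y\<in>Rstar. MT T \<phi> y = \<psi> y" using MT_prop[OF assms(1,2)] assms(4) by simp
qed



lemma tf_cmult: "\<phi> \<in> testfuns \<Longrightarrow> b \<in> Rstar \<Longrightarrow> (\<lambda>x. \<phi> (cmult x b)) \<in> testfuns"
  using tf_dil[of \<phi> b 1] by simp

lemma had_distr: "T \<in> hadamard_distr \<Longrightarrow> T \<in> distributions"
  unfolding hadamard_distr_def by blast

lemma cdiv_inv: "y \<in> Rstar \<Longrightarrow> cdiv x (cdiv ones y) = cmult x y"
  unfolding cdiv_def cmult_def ones_def Rstar_def by (simp add: vec_eq_iff)

lemma cdiv_ones_inv: "y \<in> Rstar \<Longrightarrow> cdiv ones (cdiv ones y) = y"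
  unfolding cdiv_def ones_def Rstar_def by (simp add: vec_eq_iff)

lemma cdiv_cmult: "cdiv (cmult \<xi> y) a = cmult \<xi> (cdiv y a)"
  unfolding cdiv_def cmult_def by (simp add: vec_eq_iff)

lemma Rstar_cdiv: "y \<in> Rstar \<Longrightarrow> a \<in> Rstar \<Longrightarrow> cdiv y a \<in> Rstar"
  unfolding cdiv_def Rstar_def by simp

theorem theorem1:
  fixes L :: "'n::finite distr \<Rightarrow> 'n distr"
  assumes "cont_lin_op L"
  shows "((\<forall>a\<in>Rstar. \<forall>S\<in>distributions. L (dilation a S) = dilation a (L S)) \<longleftrightarrow>
          (\<exists>T\<in>hadamard_distr. \<forall>S\<in>distributions. L S = mconv S T))
       \<and> (\<forall>T\<in>hadamard_distr. (\<forall>S\<in>distributions. L S = mconv S T) \<longrightarrow> T = L (dirac ones))"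
proof -
  note L = assms
  have part3: "\<forall>T\<in>hadamard_distr. (\<forall>S\<in>distributions. L S = mconv S T) \<longrightarrow> T = L (dirac ones)"
  proof (intro ballI impI)
    fix T assume T: "T \<in> hadamard_distr" and H: "\<forall>S\<in>distributions. L S = mconv S T"
    show "T = L (dirac ones)"
    proof (rule ext)
      fix \<phi>
      have e: "L (dirac ones) \<phi> = mconv (dirac ones) T \<phi>" using H dirac_distr by metis
      show "T \<phi> = L (dirac ones) \<phi>"
      proof (cases "\<phi> \<in> testfuns")
        case True
        have m: "MT T \<phi> \<in> testfuns" "MT T \<phi> ones = T (\<lambda>\<xi>. \<phi> (cmult \<xi> ones))"
          using MT_prop[OF T True] ones_Rstar by auto
        show ?thesis using e m True by (simp add: mconv_def dirac_def)
      next
        case False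
        then show ?thesis using e distrD1[OF had_distr[OF T]] by (simp add: mconv_def)
      qed
    qed
  qed
  have fwd: "\<exists>T\<in>hadamard_distr. \<forall>S\<in>distributions. L S = mconv S T"
    if Hd: "\<forall>a\<in>Rstar. \<forall>S\<in>distributions. L (dilation a S) = dilation a (L S)"
  proof -
    define T where "T = L (dirac ones)"
    have Td: "T \<in> distributions" unfolding T_def using clD1[OF L] dirac_distr by blast
    have key: "\<exists>\<phi>'\<in>testfuns. (\<forall>S\<in>distributions. L S \<phi> = S \<phi>') \<and> (\<forall>y\<in>Rstar. \<phi>' y = T (\<lambda>\<xi>. \<phi> (cmult \<xi> y)))"
      if \<phi>: "\<phi> \<in> testfuns" for \<phi>
    proof -
      obtain \<phi>' where \<phi>': "\<phi>' \<in> testfuns" "\<forall>S\<in>distributions. L S \<phi> = S \<phi>'"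
        using transpose[OF L \<phi>] by blast
      have "\<phi>' y = T (\<lambda>\<xi>. \<phi> (cmult \<xi> y))" if y: "y \<in> Rstar" for y
      proof -
        define a where "a = cdiv ones y"
        have a: "a \<in> Rstar" unfolding a_def using y by (rule Rstar_inv)
        define k where "k = complex_of_real (sgnprod a / (\<Prod>i\<in>UNIV. a $ i))"
        have k: "k \<noteq> 0" unfolding k_def using dil_const_nz[OF a] by simp
        have ca: "cdiv x a = cmult x y" for x unfolding a_def using y by (rule cdiv_inv)
        have e1: "dilation a (dirac ones) = (\<lambda>\<rho>. k * dirac y \<rho>)"
        proof (rule ext)
          fix \<rho> :: "'n testfun"
          show "dilation a (dirac ones) \<rho> = k * dirac y \<rho>"
          proof (cases "\<rho> \<in> testfuns")
            case True
            have "(\<lambda>x. k * \<rho> (cdiv x a)) \<in> testfuns" using tf_dil2[OF True a] by blast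
            moreover have "cdiv ones a = y" unfolding a_def using y by (rule cdiv_ones_inv)
            ultimately show ?thesis using True unfolding dilation_def dirac_def k_def by simp
          next
            case False
            then show ?thesis unfolding dilation_def dirac_def by simp
          qed
        qed
        have "L (dilation a (dirac ones)) = dilation a T" unfolding T_def using Hd a dirac_distr by blast
        moreover have "L (\<lambda>\<rho>. k * dirac y \<rho>) = (\<lambda>\<rho>. k * L (dirac y) \<rho>)"
          using clD3[OF L, rule_format, OF dirac_distr[of y], of k] by simp
        ultimately have e2: "(\<lambda>\<rho>. k * L (dirac y) \<rho>) = dilation a T" using e1 by simp
        have "k * L (dirac y) \<phi> = dilation a T \<phi>" using fun_cong[OF e2, of \<phi>] by simp
        also have "\<dots> = T (\<lambda>x. k * \<phi> (cmult x y))" using \<phi> unfolding dilation_def k_def ca by simp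
        also have "\<dots> = k * T (\<lambda>x. \<phi> (cmult x y))"
          using distrD3[OF Td, rule_format, OF tf_cmult[OF \<phi> y], of k] by simp
        finally have "L (dirac y) \<phi> = T (\<lambda>x. \<phi> (cmult x y))" using k by simp
        moreover have "L (dirac y) \<phi> = \<phi>' y"
          using \<phi>'(2) dirac_distr[of y] \<phi>'(1) by (simp add: dirac_def)
        ultimately show ?thesis by simp
      qed
      then show ?thesis using \<phi>' by blast
    qed
    have Th: "T \<in> hadamard_distr"
      unfolding hadamard_distr_def using Td key by blast
    have "\<forall>S\<in>distributions. L S = mconv S T"
    proof (intro ballI ext)
      fix S :: "'n distr" and \<phi> assume S: "S \<in> distributions"
      show "L S \<phi> = mconv S T \<phi>"
      proof (cases "\<phi> \<in> testfuns")
        case True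
        obtain \<phi>' where \<phi>': "\<phi>' \<in> testfuns" "\<forall>S\<in>distributions. L S \<phi> = S \<phi>'"
          "\<forall>y\<in>Rstar. \<phi>' y = T (\<lambda>\<xi>. \<phi> (cmult \<xi> y))"
          using key[OF True] by blast
        have "MT T \<phi> = \<phi>'" using MT_eq[OF Th True \<phi>'(1) \<phi>'(3)] .
        then show ?thesis using True \<phi>'(2) S by (simp add: mconv_def)
      next
        case False
        have "L S \<in> distributions" using clD1[OF L] S by blast
        then have "L S \<phi> = 0" using False distrD1 by blast
        then show ?thesis using False by (simp add: mconv_def)
      qed
    qed
    then show ?thesis using Th by blast
  qed
  have bwd: "\<forall>a\<in>Rstar. \<forall>S\<in>distributions. L (dilation a S) = dilation a (L S)"
    if ex: "\<exists>T\<in>hadamard_distr. \<forall>S\<in>distributions. L S = mconv S T"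
  proof -
    obtain T where T: "T \<in> hadamard_distr" and H: "\<forall>S\<in>distributions. L S = mconv S T"
      using ex by blast
    have Td: "T \<in> distributions" using T by (rule had_distr)
    show ?thesis
    proof (intro ballI)
      fix a :: "real^'n" and S :: "'n distr" assume a: "a \<in> Rstar" and S: "S \<in> distributions"
      have DS: "dilation a S \<in> distributions" using S a by (rule dilation_distr)
      have H1: "L (dilation a S) = mconv (dilation a S) T" using H DS by blast
      have H2: "L S = mconv S T" using H S by blast
      define k where "k = complex_of_real (sgnprod a / (\<Prod>i\<in>UNIV. a $ i))"
      show "L (dilation a S) = dilation a (L S)"
      proof (rule ext)
        fix \<phi>
        show "L (dilation a S) \<phi> = dilation a (L S) \<phi>"
        proof (cases "\<phi> \<in> testfuns")
          case True
          have m: "MT T \<phi> \<in> testfuns" "\<forall>y\<in>Rstar. MT T \<phi> y = T (\<lambda>\<xi>. \<phi> (cmult \<xi> y))"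
            using MT_prop[OF T True] by auto
          have d\<phi>: "(\<lambda>x. k * \<phi> (cdiv x a)) \<in> testfuns" using tf_dil2[OF True a] by blast
          have dm: "(\<lambda>x. k * MT T \<phi> (cdiv x a)) \<in> testfuns" using tf_dil2[OF m(1) a] by blast
          have claim: "MT T (\<lambda>x. k * \<phi> (cdiv x a)) = (\<lambda>x. k * MT T \<phi> (cdiv x a))"
          proof (rule MT_eq[OF T d\<phi> dm], intro ballI)
            fix y :: "real^'n" assume y: "y \<in> Rstar"
            have ya: "cdiv y a \<in> Rstar" using y a by (rule Rstar_cdiv)
            have "T (\<lambda>\<xi>. k * \<phi> (cdiv (cmult \<xi> y) a)) = T (\<lambda>\<xi>. k * \<phi> (cmult \<xi> (cdiv y a)))"
              by (simp add: cdiv_cmult)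
            also have "\<dots> = k * T (\<lambda>\<xi>. \<phi> (cmult \<xi> (cdiv y a)))"
              using distrD3[OF Td, rule_format, OF tf_cmult[OF True ya], of k] by simp
            also have "\<dots> = k * MT T \<phi> (cdiv y a)" using m(2) ya by simp
            finally show "k * MT T \<phi> (cdiv y a) = T (\<lambda>\<xi>. k * \<phi> (cdiv (cmult \<xi> y) a))" by simp
          qed
          have "L (dilation a S) \<phi> = S (\<lambda>x. k * MT T \<phi> (cdiv x a))"
            using H1 True m(1) by (simp add: mconv_def dilation_def k_def)
          moreover have "dilation a (L S) \<phi> = S (MT T (\<lambda>x. k * \<phi> (cdiv x a)))"
            using H2 True d\<phi> by (simp add: mconv_def dilation_def k_def)
          ultimately show ?thesis using claim by simp
        next
          case False
          then show ?thesis using H1 by (simp add: mconv_def dilation_def)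
        qed
      qed
    qed
  qed
  show ?thesis using part3 fwd bwd by blast
qed

end
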